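(* Let $\Gamma$, $\omega$, $(\mathbb G,E)$ be as below with $\omega$ satisfying (C1) for every $f\in\Gamma$. Let $f\in\langle\Gamma\rangle$ have arity $n$ and let $x\in\mathrm{Range}_n(\mathbb G^* )\cap[\mathrm{dom} f]^m$. (a) $f^m(\mathbf g(x))=f^m(x)$ for every $\mathbf g\in\mathbb G$. (b) If in addition $\omega$ satisfies (C2) for every $f\in\Gamma$, then there exists a probability distribution $\lambda$ on $\mathbb G^*$, independent of $f$ and $x$, such that $f^\lambda_{i'}(x)=f^\lambda_{i''}(x)$ for all $i',i''\in[m]$, where $f^\lambda_i(x)=\sum_{\mathbf g\in\mathbb G^*}\lambda_{\mathbf g}f(g_i(x))$ and $g_i(x)$ denotes the $i$-th labeling of $\mathbf g(x)$.
   Context: $D$ finite, $m\ge2$, $\Gamma$ a finite set of cost functions $f:D^n\to\mathbb Q\cup\{\infty\}$, $\mathrm{dom} f=\{x:f(x)<\infty\}$. $\langle\Gamma\rangle$ (expressive power) is the set of functions $f(x_1,\dots,x_k)=\min_{x_{k+1},\dots,x_N}f_{\mathcal I}(x_1,\dots,x_N)$ for instances $\mathcal I$ of $\mathrm{VCSP}(\Gamma)$ on variables $x_1,\dots,x_N$, where $f_{\mathcal I}$ is a finite sum of functions of $\Gamma$ applied to tuples of these variables. $\mathcal O^{(m\to m)}$: maps $\mathbf g=(g_1,\dots,g_m):D^m\to D^m$, $\mathbb 1$ the identity. For $x=(x^1,\dots,x^m)\in[D^n]^m$, $\mathbf g(x)=(g_1(x),\dots,g_m(x))$ with $g_i$ applied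 coordinatewise; $f^m(x)=\frac1m\sum_i f(x^i)$; $x_{-i}\in[D^n]^{m-1}$ is $x$ with $x^i$ removed and $f^{m-1}(x_{-i})=\frac1{m-1}\sum_{j\ne i}f(x^j)$. $\omega$ is a finitely supported probability distribution, each $s\in\mathrm{supp}(\omega)$ associated with $\mathbb 1^s=(\mathbb 1^s_1,\dots,\mathbb 1^s_m)\in\mathcal O^{(m\to m)}$. (C1): $\sum_s\omega(s)f^m(\mathbb 1^s(x))\le f^m(x)$ for all $x\in[\mathrm{dom} f]^m$. (C2): $\sum_s\omega(s)f(\mathbb 1^s_i(x))\le f^{m-1}(x_{-i})$ for all $x\in[\mathrm{dom} f]^m$, $i\in[m]$. $\mathbf g^s=\mathbb 1^s\circ\mathbf g$; $\mathbb G=\{\mathbb 1^{s_k}\circ\dots\circ\mathbb 1^{s_1}:k\ge0\}$; $E=\{(\mathbf g,\mathbf g^s):\mathbf g\in\mathbb G,s\in\mathrm{supp}(\omega)\}$; $\mathbb G^*$ is the union of strongly connected components of $(\mathbb G,E)$ with no outgoing edges; $\mathrm{Range}_n(\mathbb G^* )=\{\mathbf g^*(y):\mathbf g^*\in\mathbb G^*,y\in[D^n]^m\}$. *)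

theory Defs
  imports "HOL-Probability.Probability_Mass_Function" "HOL-Library.Extended_Real"
begin

text \<open>Domain D is a finite type 'a; the index set [m] is a finite type 'm with CARD('m) = m.
  A cost function of arity n is a pair (n, f) with f :: 'a list \<Rightarrow> ereal, only its
  values on lists of length n being relevant; values lie in Q \<union> {\<infinity>}.\<close>

type_synonym 'a cost = "nat \<times> ('a list \<Rightarrow> ereal)"

definition valued_Q_inf :: "'a cost \<Rightarrow> bool" where
  "valued_Q_inf c \<longleftrightarrow>
     (\<forall>v. length v = fst c \<longrightarrow> snd c v \<in> range (\<lambda>q. ereal (real_of_rat q)) \<union> {\<infinity>})"

definition is_instance :: "'a cost set \<Rightarrow> nat \<Rightarrow> ('a cost \<times> nat list) list \<Rightarrow> bool" where
  "is_instance \<Gamma> N I \<longleftrightarrow>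
     (\<forall>(c, sc) \<in> set I. c \<in> \<Gamma> \<and> length sc = fst c \<and> (\<forall>j \<in> set sc. j < N))"

definition inst_fun :: "('a cost \<times> nat list) list \<Rightarrow> 'a list \<Rightarrow> ereal" where
  "inst_fun I v = (\<Sum>(c, sc) \<leftarrow> I. snd c (map (\<lambda>j. v ! j) sc))"

definition expressible :: "'a cost set \<Rightarrow> nat \<Rightarrow> ('a list \<Rightarrow> ereal) \<Rightarrow> bool" where
  "expressible \<Gamma> n f \<longleftrightarrow>
     (\<exists>N I. n \<le> N \<and> is_instance \<Gamma> N I \<and>
        (\<forall>x. length x = n \<longrightarrow>
           f x = (INF y \<in> {y. length y = N - n}. inst_fun I (x @ y))))"

definition app :: "nat \<Rightarrow> (('m \<Rightarrow> 'a) \<Rightarrow> ('m \<Rightarrow> 'a)) \<Rightarrow> ('m \<Rightarrow> 'a list) \<Rightarrow> ('m \<Rightarrow> 'a list)" where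
  "app n g x = (\<lambda>i. map (\<lambda>j. g (\<lambda>i'. x i' ! j) i) [0..<n])"

definition tuples :: "nat \<Rightarrow> ('m \<Rightarrow> 'a list) \<Rightarrow> bool" where
  "tuples n x \<longleftrightarrow> (\<forall>i. length (x i) = n)"

definition in_dom_m :: "nat \<Rightarrow> ('a list \<Rightarrow> ereal) \<Rightarrow> ('m \<Rightarrow> 'a list) \<Rightarrow> bool" where
  "in_dom_m n f x \<longleftrightarrow> (\<forall>i. length (x i) = n \<and> f (x i) < \<infinity>)"

definition fm :: "('a list \<Rightarrow> ereal) \<Rightarrow> ('m::finite \<Rightarrow> 'a list) \<Rightarrow> ereal" where
  "fm f x = ereal (1 / real CARD('m)) * (\<Sum>i\<in>UNIV. f (x i))"

definition fm1 :: "('a list \<Rightarrow> ereal) \<Rightarrow> 'm::finite \<Rightarrow> ('m \<Rightarrow> 'a list) \<Rightarrow> ereal" where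
  "fm1 f i x = ereal (1 / real (CARD('m) - 1)) * (\<Sum>j\<in>UNIV - {i}. f (x j))"

definition C1 :: "'s pmf \<Rightarrow> ('s \<Rightarrow> ('m::finite \<Rightarrow> 'a) \<Rightarrow> ('m \<Rightarrow> 'a)) \<Rightarrow> 'a cost \<Rightarrow> bool" where
  "C1 \<omega> op c \<longleftrightarrow> (\<forall>x. in_dom_m (fst c) (snd c) x \<longrightarrow>
     (\<Sum>s\<in>set_pmf \<omega>. ereal (pmf \<omega> s) * fm (snd c) (app (fst c) (op s) x)) \<le> fm (snd c) x)"

definition C2 :: "'s pmf \<Rightarrow> ('s \<Rightarrow> ('m::finite \<Rightarrow> 'a) \<Rightarrow> ('m \<Rightarrow> 'a)) \<Rightarrow> 'a cost \<Rightarrow> bool" where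
  "C2 \<omega> op c \<longleftrightarrow> (\<forall>x i. in_dom_m (fst c) (snd c) x \<longrightarrow>
     (\<Sum>s\<in>set_pmf \<omega>. ereal (pmf \<omega> s) * snd c (app (fst c) (op s) x i)) \<le> fm1 (snd c) i x)"

inductive_set Gset :: "'s pmf \<Rightarrow> ('s \<Rightarrow> ('m \<Rightarrow> 'a) \<Rightarrow> ('m \<Rightarrow> 'a)) \<Rightarrow> (('m \<Rightarrow> 'a) \<Rightarrow> ('m \<Rightarrow> 'a)) set"
  for \<omega> op where
  id_in: "id \<in> Gset \<omega> op"
| step: "g \<in> Gset \<omega> op \<Longrightarrow> s \<in> set_pmf \<omega> \<Longrightarrow> op s \<circ> g \<in> Gset \<omega> op"

definition Eset :: "'s pmf \<Rightarrow> ('s \<Rightarrow> ('m \<Rightarrow> 'a) \<Rightarrow> ('m \<Rightarrow> 'a))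
    \<Rightarrow> ((('m \<Rightarrow> 'a) \<Rightarrow> ('m \<Rightarrow> 'a)) \<times> (('m \<Rightarrow> 'a) \<Rightarrow> ('m \<Rightarrow> 'a))) set" where
  "Eset \<omega> op = {(g, op s \<circ> g) | g s. g \<in> Gset \<omega> op \<and> s \<in> set_pmf \<omega>}"

definition is_SCC :: "'v set \<Rightarrow> ('v \<times> 'v) set \<Rightarrow> 'v set \<Rightarrow> bool" where
  "is_SCC V E C \<longleftrightarrow> C \<noteq> {} \<and> C \<subseteq> V \<and> (\<forall>u\<in>C. \<forall>v\<in>C. (u, v) \<in> E\<^sup>*) \<and>
     (\<forall>u\<in>C. \<forall>v\<in>V. (u, v) \<in> E\<^sup>* \<and> (v, u) \<in> E\<^sup>* \<longrightarrow> v \<in> C)"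

definition Gstar :: "'s pmf \<Rightarrow> ('s \<Rightarrow> ('m \<Rightarrow> 'a) \<Rightarrow> ('m \<Rightarrow> 'a)) \<Rightarrow> (('m \<Rightarrow> 'a) \<Rightarrow> ('m \<Rightarrow> 'a)) set" where
  "Gstar \<omega> op = \<Union>{C. is_SCC (Gset \<omega> op) (Eset \<omega> op) C \<and>
                      (\<forall>(u, v) \<in> Eset \<omega> op. u \<in> C \<longrightarrow> v \<in> C)}"

definition Range_n :: "nat \<Rightarrow> (('m \<Rightarrow> 'a) \<Rightarrow> ('m \<Rightarrow> 'a)) set \<Rightarrow> ('m \<Rightarrow> 'a list) set" where
  "Range_n n GS = {app n g y | g y. g \<in> GS \<and> tuples n y}"

definition f_lambda :: "(('m \<Rightarrow> 'a) \<Rightarrow> ('m \<Rightarrow> 'a)) pmf \<Rightarrow> (('m \<Rightarrow> 'a) \<Rightarrow> ('m \<Rightarrow> 'a)) set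
    \<Rightarrow> nat \<Rightarrow> ('a list \<Rightarrow> ereal) \<Rightarrow> 'm \<Rightarrow> ('m \<Rightarrow> 'a list) \<Rightarrow> ereal" where
  "f_lambda lam GS n f i x = (\<Sum>g\<in>GS. ereal (pmf lam g) * f (app n g x i))"

end

theory Submission
  imports Defs "HOL-Analysis.Analysis"
begin


lemma app_comp: "app n g (app n h y) = app n (g \<circ> h) y"
  by (auto simp: app_def fun_eq_iff)

lemma length_app[simp]: "length (app n g z i) = n"
  by (simp add: app_def)

lemma nth_app[simp]: "j < n \<Longrightarrow> app n g z i ! j = g (\<lambda>i'. z i' ! j) i"
  by (simp add: app_def)

lemma app_scope:
  assumes "\<forall>j\<in>set sc. j < N"
  shows "map (\<lambda>j. app N g z i ! j) sc = app (length sc) g (\<lambda>i. map (\<lambda>j. z i ! j) sc) i"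
  apply (rule nth_equalityI)
  using assms by auto

lemma app_append:
  assumes "\<forall>i. length (z i) = n" "\<forall>i. length (y i) = N - n" "n \<le> N"
  shows "app N g (\<lambda>i. z i @ y i) i = app n g z i @ app (N - n) g y i"
  apply (rule nth_equalityI)
  using assms by (auto simp: nth_append)




definition noMinf :: "nat \<Rightarrow> ('a list \<Rightarrow> ereal) \<Rightarrow> bool" where
  "noMinf k F \<longleftrightarrow> (\<forall>v. length v = k \<longrightarrow> F v \<noteq> -\<infinity>)"

definition Rsum :: "('a list \<Rightarrow> ereal) \<Rightarrow> ('m::finite \<Rightarrow> 'a list) \<Rightarrow> real" where
  "Rsum F z = (\<Sum>i\<in>UNIV. real_of_ereal (F (z i)))"

definition Roth :: "('a list \<Rightarrow> ereal) \<Rightarrow> ('m::finite \<Rightarrow> 'a list) \<Rightarrow> 'm \<Rightarrow> real" where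
  "Roth F z i = (\<Sum>j\<in>UNIV-{i}. real_of_ereal (F (z j))) / real (CARD('m) - 1)"

definition Closed :: "'s pmf \<Rightarrow> ('s \<Rightarrow> ('m::finite \<Rightarrow> 'a) \<Rightarrow> ('m \<Rightarrow> 'a)) \<Rightarrow> nat \<Rightarrow> ('a list \<Rightarrow> ereal) \<Rightarrow> bool" where
  "Closed \<omega> op k F \<longleftrightarrow> (\<forall>z s. in_dom_m k F z \<longrightarrow> s \<in> set_pmf \<omega> \<longrightarrow> in_dom_m k F (app k (op s) z))"

definition RC1 :: "'s pmf \<Rightarrow> ('s \<Rightarrow> ('m::finite \<Rightarrow> 'a) \<Rightarrow> ('m \<Rightarrow> 'a)) \<Rightarrow> nat \<Rightarrow> ('a list \<Rightarrow> ereal) \<Rightarrow> bool" where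
  "RC1 \<omega> op k F \<longleftrightarrow> (\<forall>z. in_dom_m k F z \<longrightarrow>
     (\<Sum>s\<in>set_pmf \<omega>. pmf \<omega> s * Rsum F (app k (op s) z)) \<le> Rsum F z)"

definition RC2 :: "'s pmf \<Rightarrow> ('s \<Rightarrow> ('m::finite \<Rightarrow> 'a) \<Rightarrow> ('m \<Rightarrow> 'a)) \<Rightarrow> nat \<Rightarrow> ('a list \<Rightarrow> ereal) \<Rightarrow> bool" where
  "RC2 \<omega> op k F \<longleftrightarrow> (\<forall>z i. in_dom_m k F z \<longrightarrow>
     (\<Sum>s\<in>set_pmf \<omega>. pmf \<omega> s * real_of_ereal (F (app k (op s) z i))) \<le> Roth F z i)"

lemma ereal_add_fin: "(a::ereal) \<noteq> -\<infinity> \<Longrightarrow> b \<noteq> -\<infinity> \<Longrightarrow> (a + b < \<infinity>) = (a < \<infinity> \<and> b < \<infinity>)"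
  by (cases a; cases b) auto

lemma real_add_fin: "(a::ereal) \<noteq> -\<infinity> \<Longrightarrow> b \<noteq> -\<infinity> \<Longrightarrow> a < \<infinity> \<Longrightarrow> b < \<infinity> \<Longrightarrow>
   real_of_ereal (a+b) = real_of_ereal a + real_of_ereal b"
  by (cases a; cases b) auto

lemma noMinf_add: "noMinf k F \<Longrightarrow> noMinf k G \<Longrightarrow> noMinf k (\<lambda>v. F v + G v)"
  unfolding noMinf_def by (metis ereal_plus_eq_MInfty)

lemma dom_add:
  assumes "noMinf k F" "noMinf k G"
  shows "in_dom_m k (\<lambda>v. F v + G v) z \<longleftrightarrow> in_dom_m k F z \<and> in_dom_m k G z"
  using assms by (auto simp: in_dom_m_def noMinf_def ereal_add_fin)

lemma Rsum_add:
  assumes "noMinf k F" "noMinf k G" "in_dom_m k F w" "in_dom_m k G w"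
  shows "Rsum (\<lambda>v. F v + G v) w = Rsum F w + Rsum G w"
  using assms by (auto simp: Rsum_def in_dom_m_def noMinf_def real_add_fin sum.distrib)

lemma Roth_add:
  assumes "noMinf k F" "noMinf k G" "in_dom_m k F w" "in_dom_m k G w"
  shows "Roth (\<lambda>v. F v + G v) w i = Roth F w i + Roth G w i"
  using assms by (auto simp: Roth_def in_dom_m_def noMinf_def real_add_fin sum.distrib add_divide_distrib)

lemma Closed_add:
  fixes op :: "'s \<Rightarrow> ('m::finite \<Rightarrow> 'a) \<Rightarrow> ('m \<Rightarrow> 'a)"
  assumes "noMinf k F" "noMinf k G" "Closed \<omega> op k F" "Closed \<omega> op k G"
  shows "Closed \<omega> op k (\<lambda>v. F v + G v)"
  using assms unfolding Closed_def by (simp add: dom_add)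

lemma RC1_add:
  fixes op :: "'s \<Rightarrow> ('m::finite \<Rightarrow> 'a) \<Rightarrow> ('m \<Rightarrow> 'a)"
  assumes "noMinf k F" "noMinf k G" "Closed \<omega> op k F" "Closed \<omega> op k G" "RC1 \<omega> op k F" "RC1 \<omega> op k G"
  shows "RC1 \<omega> op k (\<lambda>v. F v + G v)"
  unfolding RC1_def
proof (intro allI impI)
  fix z :: "'m \<Rightarrow> 'a list" assume "in_dom_m k (\<lambda>v. F v + G v) z"
  then have dF: "in_dom_m k F z" and dG: "in_dom_m k G z" using dom_add[OF assms(1,2)] by auto
  have "(\<Sum>s\<in>set_pmf \<omega>. pmf \<omega> s * Rsum (\<lambda>v. F v + G v) (app k (op s) z))
     = (\<Sum>s\<in>set_pmf \<omega>. pmf \<omega> s * Rsum F (app k (op s) z) + pmf \<omega> s * Rsum G (app k (op s) z))"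
    apply (rule sum.cong, simp)
    using assms(3,4) dF dG unfolding Closed_def
    by (simp add: Rsum_add[OF assms(1,2)] distrib_left)
  also have "\<dots> = (\<Sum>s\<in>set_pmf \<omega>. pmf \<omega> s * Rsum F (app k (op s) z)) + (\<Sum>s\<in>set_pmf \<omega>. pmf \<omega> s * Rsum G (app k (op s) z))"
    by (simp add: sum.distrib)
  also have "\<dots> \<le> Rsum F z + Rsum G z"
    using assms(5,6) dF dG unfolding RC1_def by (meson add_mono)
  also have "\<dots> = Rsum (\<lambda>v. F v + G v) z" using Rsum_add[OF assms(1,2) dF dG] by simp
  finally show "(\<Sum>s\<in>set_pmf \<omega>. pmf \<omega> s * Rsum (\<lambda>v. F v + G v) (app k (op s) z)) \<le> Rsum (\<lambda>v. F v + G v) z" .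
qed

lemma RC2_add:
  fixes op :: "'s \<Rightarrow> ('m::finite \<Rightarrow> 'a) \<Rightarrow> ('m \<Rightarrow> 'a)"
  assumes "noMinf k F" "noMinf k G" "Closed \<omega> op k F" "Closed \<omega> op k G" "RC2 \<omega> op k F" "RC2 \<omega> op k G"
  shows "RC2 \<omega> op k (\<lambda>v. F v + G v)"
  unfolding RC2_def
proof (intro allI impI)
  fix z :: "'m \<Rightarrow> 'a list" and i assume "in_dom_m k (\<lambda>v. F v + G v) z"
  then have dF: "in_dom_m k F z" and dG: "in_dom_m k G z" using dom_add[OF assms(1,2)] by auto
  have "(\<Sum>s\<in>set_pmf \<omega>. pmf \<omega> s * real_of_ereal (F (app k (op s) z i) + G (app k (op s) z i)))
     = (\<Sum>s\<in>set_pmf \<omega>. pmf \<omega> s * real_of_ereal (F (app k (op s) z i)) + pmf \<omega> s * real_of_ereal (G (app k (op s) z i)))"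
    apply (rule sum.cong, simp)
    using assms(1-4) dF dG unfolding Closed_def in_dom_m_def noMinf_def
    by (simp add: real_add_fin distrib_left)
  also have "\<dots> = (\<Sum>s\<in>set_pmf \<omega>. pmf \<omega> s * real_of_ereal (F (app k (op s) z i))) + (\<Sum>s\<in>set_pmf \<omega>. pmf \<omega> s * real_of_ereal (G (app k (op s) z i)))"
    by (simp add: sum.distrib)
  also have "\<dots> \<le> Roth F z i + Roth G z i"
    using assms(5,6) dF dG unfolding RC2_def by (meson add_mono)
  also have "\<dots> = Roth (\<lambda>v. F v + G v) z i" using Roth_add[OF assms(1,2) dF dG] by simp
  finally show "(\<Sum>s\<in>set_pmf \<omega>. pmf \<omega> s * real_of_ereal (F (app k (op s) z i) + G (app k (op s) z i))) \<le> Roth (\<lambda>v. F v + G v) z i" .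
qed

lemma all_zero:
  "noMinf k (\<lambda>v. 0) \<and> Closed \<omega> op k (\<lambda>v. 0) \<and> RC1 \<omega> op k (\<lambda>v. 0) \<and> RC2 \<omega> op k (\<lambda>v. 0)"
  by (simp add: noMinf_def Closed_def RC1_def RC2_def in_dom_m_def Rsum_def Roth_def)

lemma scope_all:
  fixes op :: "'s \<Rightarrow> ('m::finite \<Rightarrow> 'a) \<Rightarrow> ('m \<Rightarrow> 'a)"
  assumes sc: "\<forall>j\<in>set sc. j < N"
    and nm: "noMinf (length sc) c" and cl: "Closed \<omega> op (length sc) c"
  shows "noMinf N (\<lambda>v. c (map (\<lambda>j. v ! j) sc)) \<and> Closed \<omega> op N (\<lambda>v. c (map (\<lambda>j. v ! j) sc))
     \<and> (RC1 \<omega> op (length sc) c \<longrightarrow> RC1 \<omega> op N (\<lambda>v. c (map (\<lambda>j. v ! j) sc)))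
     \<and> (RC2 \<omega> op (length sc) c \<longrightarrow> RC2 \<omega> op N (\<lambda>v. c (map (\<lambda>j. v ! j) sc)))"
proof -
  let ?F = "\<lambda>v. c (map (\<lambda>j. v ! j) sc)"
  define pr where "pr = (\<lambda>(z::'m \<Rightarrow> 'a list) i. map (\<lambda>j. z i ! j) sc)"
  have dom: "in_dom_m N ?F z \<Longrightarrow> in_dom_m (length sc) c (pr z)" for z
    by (auto simp: in_dom_m_def pr_def)
  have eq: "?F (app N g z i) = c (app (length sc) g (pr z) i)" for g z i
    unfolding pr_def using app_scope[OF sc, of g z i] by metis
  have eqz: "?F (z i) = c (pr z i)" for z i by (simp add: pr_def)
  have eq2: "pr (app N g z) i = app (length sc) g (pr z) i" for g z i
    unfolding pr_def using app_scope[OF sc, of g z i] by metis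
  show ?thesis
  proof (intro conjI impI)
    show "noMinf N ?F" using nm by (auto simp: noMinf_def)
    show "Closed \<omega> op N ?F" using cl dom unfolding Closed_def
      by (simp add: in_dom_m_def eq)
    show "RC1 \<omega> op N ?F" if "RC1 \<omega> op (length sc) c"
      using that dom unfolding RC1_def Rsum_def by (simp add: eqz eq2)
    show "RC2 \<omega> op N ?F" if "RC2 \<omega> op (length sc) c"
      using that dom unfolding RC2_def Roth_def by (simp add: eqz eq2)
  qed
qed




lemma fin_ereal: "(a::ereal) \<noteq> -\<infinity> \<Longrightarrow> a < \<infinity> \<Longrightarrow> a = ereal (real_of_ereal a)"
  by (cases a) auto

lemma real_mono_fin: "(a::ereal) \<le> b \<Longrightarrow> a \<noteq> -\<infinity> \<Longrightarrow> b < \<infinity> \<Longrightarrow> real_of_ereal a \<le> real_of_ereal b"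
  by (cases a; cases b) auto

lemma inst_fun_Nil: "inst_fun [] = (\<lambda>v. 0)"
  by (simp add: inst_fun_def fun_eq_iff)

lemma inst_fun_Cons: "inst_fun ((c, sc) # I) = (\<lambda>v. snd c (map (\<lambda>j. v ! j) sc) + inst_fun I v)"
  by (simp add: inst_fun_def fun_eq_iff)

lemma inst_all:
  fixes op :: "'s \<Rightarrow> ('m::finite \<Rightarrow> 'a) \<Rightarrow> ('m \<Rightarrow> 'a)"
  assumes "\<forall>(c,sc)\<in>set I. length sc = fst c \<and> (\<forall>j\<in>set sc. j < N) \<and> noMinf (fst c) (snd c)
      \<and> Closed \<omega> op (fst c) (snd c) \<and> RC1 \<omega> op (fst c) (snd c) \<and> (P2 \<longrightarrow> RC2 \<omega> op (fst c) (snd c))"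
  shows "noMinf N (inst_fun I) \<and> Closed \<omega> op N (inst_fun I) \<and> RC1 \<omega> op N (inst_fun I)
      \<and> (P2 \<longrightarrow> RC2 \<omega> op N (inst_fun I))"
  using assms
proof (induction I)
  case Nil
  then show ?case by (simp add: inst_fun_Nil noMinf_def Closed_def RC1_def RC2_def in_dom_m_def Rsum_def Roth_def)
next
  case (Cons x I)
  obtain c sc where x: "x = (c, sc)" by fastforce
  have h: "length sc = fst c" "\<forall>j\<in>set sc. j < N" "noMinf (fst c) (snd c)"
      "Closed \<omega> op (fst c) (snd c)" "RC1 \<omega> op (fst c) (snd c)" "P2 \<longrightarrow> RC2 \<omega> op (fst c) (snd c)"
    using Cons.prems x by auto
  have IH: "noMinf N (inst_fun I) \<and> Closed \<omega> op N (inst_fun I) \<and> RC1 \<omega> op N (inst_fun I)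
      \<and> (P2 \<longrightarrow> RC2 \<omega> op N (inst_fun I))" using Cons by auto
  have S: "noMinf N (\<lambda>v. snd c (map (\<lambda>j. v ! j) sc)) \<and> Closed \<omega> op N (\<lambda>v. snd c (map (\<lambda>j. v ! j) sc))
     \<and> (RC1 \<omega> op (length sc) (snd c) \<longrightarrow> RC1 \<omega> op N (\<lambda>v. snd c (map (\<lambda>j. v ! j) sc)))
     \<and> (RC2 \<omega> op (length sc) (snd c) \<longrightarrow> RC2 \<omega> op N (\<lambda>v. snd c (map (\<lambda>j. v ! j) sc)))"
    using scope_all[of sc N "snd c" \<omega> op] h by simp
  let ?G = "\<lambda>v. snd c (map (\<lambda>j. v ! j) sc)"
  have g0: "noMinf N ?G" "Closed \<omega> op N ?G" using S by auto
  have g1: "RC1 \<omega> op N ?G" using S h by simp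
  have g2: "P2 \<longrightarrow> RC2 \<omega> op N ?G" using S h by simp
  have i0: "noMinf N (inst_fun I)" "Closed \<omega> op N (inst_fun I)" "RC1 \<omega> op N (inst_fun I)"
    "P2 \<longrightarrow> RC2 \<omega> op N (inst_fun I)" using IH by auto
  show ?case unfolding x inst_fun_Cons
  proof (intro conjI impI)
    show "noMinf N (\<lambda>v. ?G v + inst_fun I v)" by (rule noMinf_add[OF g0(1) i0(1)])
    show "Closed \<omega> op N (\<lambda>v. ?G v + inst_fun I v)" by (rule Closed_add[OF g0(1) i0(1) g0(2) i0(2)])
    show "RC1 \<omega> op N (\<lambda>v. ?G v + inst_fun I v)" by (rule RC1_add[OF g0(1) i0(1) g0(2) i0(2) g1 i0(3)])
    show "RC2 \<omega> op N (\<lambda>v. ?G v + inst_fun I v)" if P2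
      using RC2_add[OF g0(1) i0(1) g0(2) i0(2)] g2 i0(4) that by blast
  qed
qed

lemma proj_all:
  fixes op :: "'s \<Rightarrow> ('m::finite \<Rightarrow> 'a::finite) \<Rightarrow> ('m \<Rightarrow> 'a)"
  assumes nN: "n \<le> N"
    and fdef: "\<forall>x. length x = n \<longrightarrow> f x = (INF y \<in> {y. length y = N - n}. F (x @ y))"
    and nm: "noMinf N F" and cl: "Closed \<omega> op N F" and r1: "RC1 \<omega> op N F"
  shows "noMinf n f \<and> Closed \<omega> op n f \<and> RC1 \<omega> op n f \<and> (RC2 \<omega> op N F \<longrightarrow> RC2 \<omega> op n f)"
proof -
  let ?Y = "{y::'a list. length y = N - n}"
  have finY: "finite ?Y" using finite_lists_length_eq[of "UNIV::'a set" "N-n"] by simp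
  have neY: "?Y \<noteq> {}" by (metis (mono_tags, lifting) empty_iff length_replicate mem_Collect_eq)
  have lb: "f x \<le> F (x @ y)" if "length x = n" "length y = N - n" for x y
    using fdef that by (auto intro: INF_lower)
  have att: "\<exists>y. length y = N - n \<and> f x = F (x @ y)" if "length x = n" for x
  proof -
    have "f x = Inf ((\<lambda>y. F (x @ y)) ` ?Y)" using fdef that by simp
    also have "\<dots> = Min ((\<lambda>y. F (x @ y)) ` ?Y)" using finY neY by (simp add: Min_Inf)
    also have "\<dots> \<in> (\<lambda>y. F (x @ y)) ` ?Y" using finY neY by (intro Min_in) auto
    finally show ?thesis by auto
  qed
  have nmf: "noMinf n f" unfolding noMinf_def
  proof (intro allI impI)
    fix x :: "'a list" assume "length x = n"
    then obtain y where "length y = N - n" "f x = F (x @ y)" using att by blast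
    then show "f x \<noteq> -\<infinity>" using nm nN \<open>length x = n\<close> by (auto simp: noMinf_def)
  qed
  have key: "\<exists>Z. in_dom_m N F Z \<and> (\<forall>i. F (Z i) = f (z i)) \<and>
      (\<forall>s i. f (app n (op s) z i) \<le> F (app N (op s) Z i))" if dz: "in_dom_m n f z" for z
  proof -
    have "\<forall>i. \<exists>y. length y = N - n \<and> f (z i) = F (z i @ y)" using att dz by (auto simp: in_dom_m_def)
    then obtain Y where Y: "\<And>i. length (Y i) = N - n" "\<And>i. f (z i) = F (z i @ Y i)" by metis
    define Z where "Z = (\<lambda>i. z i @ Y i)"
    have "in_dom_m N F Z" using dz Y nN by (auto simp: in_dom_m_def Z_def)
    moreover have "\<forall>i. F (Z i) = f (z i)" using Y by (simp add: Z_def)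
    moreover have "f (app n (op s) z i) \<le> F (app N (op s) Z i)" for s i
    proof -
      have "app N (op s) Z i = app n (op s) z i @ app (N - n) (op s) Y i"
        unfolding Z_def using dz Y nN by (intro app_append) (auto simp: in_dom_m_def)
      then show ?thesis using lb by simp
    qed
    ultimately show ?thesis by blast
  qed
  have fin_step: "in_dom_m n f (app n (op s) z) \<and>
      (\<forall>i. real_of_ereal (f (app n (op s) z i)) \<le> real_of_ereal (F (app N (op s) Z i)))"
    if dz: "in_dom_m n f z" and dZ: "in_dom_m N F Z" and le: "\<forall>s i. f (app n (op s) z i) \<le> F (app N (op s) Z i)"
      and s: "s \<in> set_pmf \<omega>" for z Z s
  proof -
    have dZ': "in_dom_m N F (app N (op s) Z)" using cl dZ s by (auto simp: Closed_def)
    have "f (app n (op s) z i) < \<infinity>" for i using le dZ' by (metis in_dom_m_def order.strict_trans1)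
    then show ?thesis using le dZ' nmf
      by (auto simp: in_dom_m_def noMinf_def intro!: real_mono_fin)
  qed
  have clf: "Closed \<omega> op n f" unfolding Closed_def
    using key fin_step by blast
  have r1f: "RC1 \<omega> op n f" unfolding RC1_def
  proof (intro allI impI)
    fix z :: "'m \<Rightarrow> 'a list" assume dz: "in_dom_m n f z"
    then obtain Z where Z: "in_dom_m N F Z" "\<forall>i. F (Z i) = f (z i)"
      "\<forall>s i. f (app n (op s) z i) \<le> F (app N (op s) Z i)" using key by blast
    have "(\<Sum>s\<in>set_pmf \<omega>. pmf \<omega> s * Rsum f (app n (op s) z))
        \<le> (\<Sum>s\<in>set_pmf \<omega>. pmf \<omega> s * Rsum F (app N (op s) Z))"
      apply (rule sum_mono, rule mult_left_mono)
      using fin_step[OF dz Z(1) Z(3)] by (auto simp: Rsum_def intro!: sum_mono)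
    also have "\<dots> \<le> Rsum F Z" using r1 Z(1) by (simp add: RC1_def)
    also have "\<dots> = Rsum f z" using Z(2) by (simp add: Rsum_def)
    finally show "(\<Sum>s\<in>set_pmf \<omega>. pmf \<omega> s * Rsum f (app n (op s) z)) \<le> Rsum f z" .
  qed
  have r2f: "RC2 \<omega> op n f" if r2: "RC2 \<omega> op N F" unfolding RC2_def
  proof (intro allI impI)
    fix z :: "'m \<Rightarrow> 'a list" and i assume dz: "in_dom_m n f z"
    then obtain Z where Z: "in_dom_m N F Z" "\<forall>i. F (Z i) = f (z i)"
      "\<forall>s i. f (app n (op s) z i) \<le> F (app N (op s) Z i)" using key by blast
    have "(\<Sum>s\<in>set_pmf \<omega>. pmf \<omega> s * real_of_ereal (f (app n (op s) z i)))
        \<le> (\<Sum>s\<in>set_pmf \<omega>. pmf \<omega> s * real_of_ereal (F (app N (op s) Z i)))"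
      apply (rule sum_mono, rule mult_left_mono)
      using fin_step[OF dz Z(1) Z(3)] by auto
    also have "\<dots> \<le> Roth F Z i" using r2 Z(1) by (simp add: RC2_def)
    also have "\<dots> = Roth f z i" using Z(2) by (simp add: Roth_def)
    finally show "(\<Sum>s\<in>set_pmf \<omega>. pmf \<omega> s * real_of_ereal (f (app n (op s) z i))) \<le> Roth f z i" .
  qed
  show ?thesis using nmf clf r1f r2f by blast
qed




lemma fm_eq:
  fixes w :: "'m::finite \<Rightarrow> 'a list"
  assumes "in_dom_m k F w" "noMinf k F"
  shows "fm F w = ereal (1 / real CARD('m) * Rsum F w)"
proof -
  have "\<And>i. F (w i) = ereal (real_of_ereal (F (w i)))"
    using assms by (intro fin_ereal) (auto simp: in_dom_m_def noMinf_def)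
  then have "(\<Sum>i\<in>UNIV. F (w i)) = (\<Sum>i\<in>UNIV. ereal (real_of_ereal (F (w i))))" by simp
  then show ?thesis by (simp add: fm_def Rsum_def)
qed

lemma le_not_inf: "(x::ereal) \<le> y \<Longrightarrow> y \<noteq> \<infinity> \<Longrightarrow> x \<noteq> \<infinity>"
  by auto

lemma pos_mult_inf: "(a::real) > 0 \<Longrightarrow> ereal a * x \<noteq> \<infinity> \<Longrightarrow> x \<noteq> \<infinity>"
  by auto

lemma from_C:
  fixes op :: "'s \<Rightarrow> ('m::finite \<Rightarrow> 'a) \<Rightarrow> ('m \<Rightarrow> 'a)"
  assumes fin: "finite (set_pmf \<omega>)" and v: "valued_Q_inf c" and c1: "C1 \<omega> op c"
  shows "noMinf (fst c) (snd c) \<and> Closed \<omega> op (fst c) (snd c) \<and> RC1 \<omega> op (fst c) (snd c)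
     \<and> (C2 \<omega> op c \<longrightarrow> RC2 \<omega> op (fst c) (snd c))"
proof -
  obtain k F where c: "c = (k, F)" by fastforce
  have nm: "noMinf k F" unfolding noMinf_def
  proof (intro allI impI)
    fix u :: "'a list" assume "length u = k"
    then have "F u \<in> range (\<lambda>q. ereal (real_of_rat q)) \<union> {\<infinity>}"
      using v unfolding valued_Q_inf_def c by simp
    then show "F u \<noteq> -\<infinity>" by auto
  qed
  have mpos: "real CARD('m) > 0" by simp
  have cl: "Closed \<omega> op k F" unfolding Closed_def
  proof (intro allI impI)
    fix z :: "'m \<Rightarrow> 'a list" and s assume dz: "in_dom_m k F z" and s: "s \<in> set_pmf \<omega>"
    have c1': "\<forall>x. in_dom_m k F x \<longrightarrow> (\<Sum>s\<in>set_pmf \<omega>. ereal (pmf \<omega> s) * fm F (app k (op s) x)) \<le> fm F x"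
      using c1 unfolding C1_def c by simp
    have le: "(\<Sum>s\<in>set_pmf \<omega>. ereal (pmf \<omega> s) * fm F (app k (op s) z)) \<le> fm F z"
      using c1' dz by blast
    have "fm F z \<noteq> \<infinity>" using fm_eq[OF dz nm] by simp
    then have "(\<Sum>s\<in>set_pmf \<omega>. ereal (pmf \<omega> s) * fm F (app k (op s) z)) \<noteq> \<infinity>"
      using le le_not_inf by blast
    then have "ereal (pmf \<omega> s) * fm F (app k (op s) z) \<noteq> \<infinity>"
      using s fin sum_Pinfty[of "\<lambda>s. ereal (pmf \<omega> s) * fm F (app k (op s) z)" "set_pmf \<omega>"] by blast
    moreover have "pmf \<omega> s > 0" using s by (simp add: pmf_positive)
    ultimately have "fm F (app k (op s) z) \<noteq> \<infinity>"
      using pos_mult_inf by blast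
    then have "(\<Sum>i\<in>UNIV. F (app k (op s) z i)) \<noteq> \<infinity>"
      unfolding fm_def using mpos pos_mult_inf[of "1 / real CARD('m)"] by simp
    then have "\<forall>i. F (app k (op s) z i) \<noteq> \<infinity>"
      using sum_Pinfty[of "\<lambda>i. F (app k (op s) z i)" UNIV] by auto
    then show "in_dom_m k F (app k (op s) z)" by (simp add: in_dom_m_def less_top)
  qed
  have r1: "RC1 \<omega> op k F" unfolding RC1_def
  proof (intro allI impI)
    fix z :: "'m \<Rightarrow> 'a list" assume dz: "in_dom_m k F z"
    have le: "(\<Sum>s\<in>set_pmf \<omega>. ereal (pmf \<omega> s) * fm F (app k (op s) z)) \<le> fm F z"
      using c1 dz by (simp add: C1_def c)
    have "(\<Sum>s\<in>set_pmf \<omega>. ereal (pmf \<omega> s) * fm F (app k (op s) z))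
        = (\<Sum>s\<in>set_pmf \<omega>. ereal (pmf \<omega> s * (1 / real CARD('m) * Rsum F (app k (op s) z))))"
      apply (rule sum.cong, simp)
      subgoal for s
        using cl dz fm_eq[OF _ nm, of "app k (op s) z"] by (simp add: Closed_def)
      done
    also have "\<dots> = ereal (1 / real CARD('m) * (\<Sum>s\<in>set_pmf \<omega>. pmf \<omega> s * Rsum F (app k (op s) z)))"
      by (simp add: sum_distrib_left algebra_simps)
    finally have "1 / real CARD('m) * (\<Sum>s\<in>set_pmf \<omega>. pmf \<omega> s * Rsum F (app k (op s) z))
        \<le> 1 / real CARD('m) * Rsum F z"
      using le fm_eq[OF dz nm] by simp
    then show "(\<Sum>s\<in>set_pmf \<omega>. pmf \<omega> s * Rsum F (app k (op s) z)) \<le> Rsum F z"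
      using mpos by (simp add: divide_le_cancel)
  qed
  have r2: "RC2 \<omega> op k F" if c2: "C2 \<omega> op c" unfolding RC2_def
  proof (intro allI impI)
    fix z :: "'m \<Rightarrow> 'a list" and i assume dz: "in_dom_m k F z"
    have le: "(\<Sum>s\<in>set_pmf \<omega>. ereal (pmf \<omega> s) * F (app k (op s) z i)) \<le> fm1 F i z"
      using c2 dz by (simp add: C2_def c)
    have "(\<Sum>s\<in>set_pmf \<omega>. ereal (pmf \<omega> s) * F (app k (op s) z i))
        = (\<Sum>s\<in>set_pmf \<omega>. ereal (pmf \<omega> s * real_of_ereal (F (app k (op s) z i))))"
      apply (rule sum.cong, simp)
      subgoal for s
      proof -
        assume s: "s \<in> set_pmf \<omega>"
        have "F (app k (op s) z i) = ereal (real_of_ereal (F (app k (op s) z i)))"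
          using cl dz nm s by (intro fin_ereal) (auto simp: Closed_def in_dom_m_def noMinf_def)
        then show ?thesis by (metis times_ereal.simps(1))
      qed
      done
    also have "\<dots> = ereal (\<Sum>s\<in>set_pmf \<omega>. pmf \<omega> s * real_of_ereal (F (app k (op s) z i)))"
      by simp
    finally have L: "(\<Sum>s\<in>set_pmf \<omega>. ereal (pmf \<omega> s) * F (app k (op s) z i)) = \<dots>" .
    have "\<And>j. F (z j) = ereal (real_of_ereal (F (z j)))"
      using dz nm by (intro fin_ereal) (auto simp: in_dom_m_def noMinf_def)
    then have "(\<Sum>j\<in>UNIV-{i}. F (z j)) = (\<Sum>j\<in>UNIV-{i}. ereal (real_of_ereal (F (z j))))" by simp
    then have R: "fm1 F i z = ereal (Roth F z i)"
      by (simp add: fm1_def Roth_def)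
    show "(\<Sum>s\<in>set_pmf \<omega>. pmf \<omega> s * real_of_ereal (F (app k (op s) z i))) \<le> Roth F z i"
      using le L R by simp
  qed
  show ?thesis using nm cl r1 r2 c by simp
qed

lemma expr_all:
  fixes op :: "'s \<Rightarrow> ('m::finite \<Rightarrow> 'a::finite) \<Rightarrow> ('m \<Rightarrow> 'a)"
  assumes fin: "finite (set_pmf \<omega>)" and v: "\<forall>c\<in>\<Gamma>. valued_Q_inf c" and c1: "\<forall>c\<in>\<Gamma>. C1 \<omega> op c"
    and ex: "expressible \<Gamma> n f"
  shows "noMinf n f \<and> Closed \<omega> op n f \<and> RC1 \<omega> op n f \<and> ((\<forall>c\<in>\<Gamma>. C2 \<omega> op c) \<longrightarrow> RC2 \<omega> op n f)"
proof -
  obtain N I where nN: "n \<le> N" and inst: "is_instance \<Gamma> N I"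
    and fdef: "\<forall>x. length x = n \<longrightarrow> f x = (INF y \<in> {y. length y = N - n}. inst_fun I (x @ y))"
    using ex unfolding expressible_def by blast
  have "\<forall>(c,sc)\<in>set I. length sc = fst c \<and> (\<forall>j\<in>set sc. j < N) \<and> noMinf (fst c) (snd c)
      \<and> Closed \<omega> op (fst c) (snd c) \<and> RC1 \<omega> op (fst c) (snd c)
      \<and> ((\<forall>c\<in>\<Gamma>. C2 \<omega> op c) \<longrightarrow> RC2 \<omega> op (fst c) (snd c))"
  proof (intro ballI, clarify)
    fix c sc assume "(c, sc) \<in> set I"
    then have "c \<in> \<Gamma>" "length sc = fst c" "\<forall>j\<in>set sc. j < N" using inst by (auto simp: is_instance_def)
    then show "length sc = fst c \<and> (\<forall>j\<in>set sc. j < N) \<and> noMinf (fst c) (snd c)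
      \<and> Closed \<omega> op (fst c) (snd c) \<and> RC1 \<omega> op (fst c) (snd c)
      \<and> ((\<forall>c\<in>\<Gamma>. C2 \<omega> op c) \<longrightarrow> RC2 \<omega> op (fst c) (snd c))"
      using from_C[OF fin, of c op] v c1 by auto
  qed
  from inst_all[OF this] have I: "noMinf N (inst_fun I)" "Closed \<omega> op N (inst_fun I)" "RC1 \<omega> op N (inst_fun I)"
      "(\<forall>c\<in>\<Gamma>. C2 \<omega> op c) \<longrightarrow> RC2 \<omega> op N (inst_fun I)" by auto
  show ?thesis using proj_all[OF nN fdef I(1-3)] I(4) by blast
qed




lemma Eset_iff: "(u, v) \<in> Eset \<omega> op \<longleftrightarrow> u \<in> Gset \<omega> op \<and> (\<exists>s\<in>set_pmf \<omega>. v = op s \<circ> u)"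
  by (auto simp: Eset_def)

lemma rtr_comp:
  assumes "(u, v) \<in> (Eset \<omega> op)\<^sup>*" "u \<in> Gset \<omega> op"
  shows "\<exists>k\<in>Gset \<omega> op. v = k \<circ> u"
  using assms(1)
proof (induction rule: rtrancl_induct)
  case base
  then show ?case by (metis Gset.id_in id_comp)
next
  case (step v w)
  then obtain k where k: "k \<in> Gset \<omega> op" "v = k \<circ> u" by blast
  from step(2) obtain s where s: "s \<in> set_pmf \<omega>" "w = op s \<circ> v" by (auto simp: Eset_iff)
  have "op s \<circ> k \<in> Gset \<omega> op" using Gset.step[OF k(1) s(1)] .
  moreover have "w = (op s \<circ> k) \<circ> u" using s k by (simp add: o_assoc)
  ultimately show ?case by blast
qed

lemma rtr_Gset:
  assumes "(u, v) \<in> (Eset \<omega> op)\<^sup>*" "u \<in> Gset \<omega> op"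
  shows "v \<in> Gset \<omega> op"
  using assms(1,2) by (induction rule: rtrancl_induct) (auto simp: Eset_iff intro: Gset.step)

definition sinkSCC where
  "sinkSCC \<omega> op C \<longleftrightarrow> is_SCC (Gset \<omega> op) (Eset \<omega> op) C \<and> (\<forall>(u, v) \<in> Eset \<omega> op. u \<in> C \<longrightarrow> v \<in> C)"

lemma Gstar_iff: "h \<in> Gstar \<omega> op \<longleftrightarrow> (\<exists>C. sinkSCC \<omega> op C \<and> h \<in> C)"
  by (auto simp: Gstar_def sinkSCC_def)

lemma sink_step:
  assumes "sinkSCC \<omega> op C" "u \<in> C" "s \<in> set_pmf \<omega>"
  shows "op s \<circ> u \<in> C"
proof -
  have "u \<in> Gset \<omega> op" using assms by (auto simp: sinkSCC_def is_SCC_def)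
  then have "(u, op s \<circ> u) \<in> Eset \<omega> op" using assms(3) by (auto simp: Eset_iff)
  then show ?thesis using assms(1,2) by (auto simp: sinkSCC_def)
qed

lemma sink_comp:
  assumes "sinkSCC \<omega> op C" "h \<in> C" "g \<in> Gset \<omega> op"
  shows "g \<circ> h \<in> C"
  using assms(3)
proof (induction rule: Gset.induct)
  case id_in
  then show ?case using assms(2) by simp
next
  case (step g s)
  have "op s \<circ> (g \<circ> h) \<in> C" using sink_step[OF assms(1) step.IH step.hyps(2)] .
  then show ?case by (metis comp_assoc)
qed

lemma Gstar_step: "u \<in> Gstar \<omega> op \<Longrightarrow> s \<in> set_pmf \<omega> \<Longrightarrow> op s \<circ> u \<in> Gstar \<omega> op"
  using sink_step by (metis Gstar_iff)

lemma Gstar_sub: "Gstar \<omega> op \<subseteq> Gset \<omega> op"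
  by (auto simp: Gstar_def is_SCC_def)

lemma Gstar_ne:
  fixes op :: "'s \<Rightarrow> ('m::finite \<Rightarrow> 'a::finite) \<Rightarrow> ('m \<Rightarrow> 'a)"
  shows "Gstar \<omega> op \<noteq> {}"
proof -
  let ?E = "Eset \<omega> op" and ?G = "Gset \<omega> op"
  define r where "r = (\<lambda>u. {v. (u, v) \<in> ?E\<^sup>*})"
  have finr: "finite (r u)" for u by simp
  obtain g where g: "g \<in> ?G" "\<forall>h. h \<in> ?G \<longrightarrow> card (r g) \<le> card (r h)"
    using ex_has_least_nat[of "\<lambda>h. h \<in> ?G" id "\<lambda>h. card (r h)"] Gset.id_in by blast
  let ?C = "r g"
  have sub: "?C \<subseteq> ?G" using rtr_Gset g(1) by (auto simp: r_def)
  have bk: "(u, g) \<in> ?E\<^sup>*" if "u \<in> ?C" for u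
  proof -
    have "r u \<subseteq> r g" using that by (auto simp: r_def)
    moreover have "card (r g) \<le> card (r u)" using g(2) sub that by auto
    ultimately have "r u = r g" using finr by (simp add: card_seteq)
    then show ?thesis by (auto simp: r_def)
  qed
  have "sinkSCC \<omega> op ?C"
    unfolding sinkSCC_def is_SCC_def
  proof (intro conjI ballI impI)
    show "?C \<noteq> {}" by (auto simp: r_def)
    show "?C \<subseteq> ?G" by (rule sub)
    show "(u, v) \<in> ?E\<^sup>*" if "u \<in> ?C" "v \<in> ?C" for u v
      using bk[OF that(1)] that(2) by (auto simp: r_def)
    show "v \<in> ?C" if "u \<in> ?C" "v \<in> ?G" "(u, v) \<in> ?E\<^sup>* \<and> (v, u) \<in> ?E\<^sup>*" for u v
      using that by (auto simp: r_def)
    show "\<And>x. x \<in> ?E \<Longrightarrow> (case x of (u, v) \<Rightarrow> u \<in> ?C \<longrightarrow> v \<in> ?C)"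
      by (auto simp: r_def)
  qed
  then show ?thesis using Gstar_iff by (metis all_not_in_conv is_SCC_def sinkSCC_def)
qed




lemma app_id: "\<forall>i. length (x i) = n \<Longrightarrow> app n id x = x"
  by (auto simp: app_def fun_eq_iff intro: nth_equalityI)

lemma dom_G:
  fixes op :: "'s \<Rightarrow> ('m::finite \<Rightarrow> 'a) \<Rightarrow> ('m \<Rightarrow> 'a)"
  assumes cl: "Closed \<omega> op n f" and dx: "in_dom_m n f x" and g: "g \<in> Gset \<omega> op"
  shows "in_dom_m n f (app n g x)"
  using g
proof (induction rule: Gset.induct)
  case id_in
  have "\<forall>i. length (x i) = n" using dx by (simp add: in_dom_m_def)
  then show ?case by (subst app_id) (use dx in auto)
next
  case (step g s)
  then have "in_dom_m n f (app n (op s) (app n g x))" using cl unfolding Closed_def by blast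
  then show ?case by (simp only: app_comp)
qed

lemma partA:
  fixes op :: "'s \<Rightarrow> ('m::finite \<Rightarrow> 'a::finite) \<Rightarrow> ('m \<Rightarrow> 'a)"
  assumes fin: "finite (set_pmf \<omega>)" and nm: "noMinf n f" and cl: "Closed \<omega> op n f"
    and r1: "RC1 \<omega> op n f"
    and x: "x \<in> Range_n n (Gstar \<omega> op)" and dx: "in_dom_m n f x" and g: "g \<in> Gset \<omega> op"
  shows "fm f (app n g x) = fm f x"
proof -
  obtain h0 y where h0: "h0 \<in> Gstar \<omega> op" and xy: "x = app n h0 y"
    using x by (auto simp: Range_n_def)
  obtain C where C: "sinkSCC \<omega> op C" "h0 \<in> C" using h0 Gstar_iff by metis
  have h0G: "h0 \<in> Gset \<omega> op" using h0 Gstar_sub by blast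
  have conn: "\<forall>u\<in>C. \<forall>v\<in>C. (u, v) \<in> (Eset \<omega> op)\<^sup>*"
    using C(1) unfolding sinkSCC_def is_SCC_def by blast
  define \<Phi> where "\<Phi> h = Rsum f (app n h y)" for h
  have domC: "in_dom_m n f (app n h y)" if "h \<in> C" for h
  proof -
    have "(h0, h) \<in> (Eset \<omega> op)\<^sup>*" using conn C(2) that by blast
    then obtain k where k: "k \<in> Gset \<omega> op" "h = k \<circ> h0" using rtr_comp h0G by blast
    have "app n h y = app n k x" using k xy by (simp add: app_comp)
    then show ?thesis using dom_G[OF cl dx k(1)] by simp
  qed
  have finC: "finite C" by simp
  have neC: "C \<noteq> {}" using C(2) by blast
  define M where "M = Min (\<Phi> ` C)"
  have "M \<in> \<Phi> ` C" unfolding M_def using finC neC by (intro Min_in) auto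
  then obtain h1 where h1: "h1 \<in> C" "\<Phi> h1 = M" by auto
  have Mle: "M \<le> \<Phi> h" if "h \<in> C" for h using finC that unfolding M_def by simp
  have stepM: "\<Phi> (op s \<circ> h) = M" if h: "h \<in> C" "\<Phi> h = M" and s: "s \<in> set_pmf \<omega>" for h s
  proof -
    have A: "(\<Sum>s\<in>set_pmf \<omega>. pmf \<omega> s * Rsum f (app n (op s) (app n h y))) \<le> Rsum f (app n h y)"
      using r1 domC[OF h(1)] unfolding RC1_def by blast
    have B: "\<And>s. Rsum f (app n (op s) (app n h y)) = \<Phi> (op s \<circ> h)" unfolding \<Phi>_def by (simp only: app_comp)
    have le: "(\<Sum>s\<in>set_pmf \<omega>. pmf \<omega> s * \<Phi> (op s \<circ> h)) \<le> M"
      using A h(2) unfolding B \<Phi>_def[symmetric] by simp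
    have one: "(\<Sum>s\<in>set_pmf \<omega>. pmf \<omega> s) = 1" using fin by (simp add: sum_pmf_eq_1)
    have "(\<Sum>s\<in>set_pmf \<omega>. pmf \<omega> s * (\<Phi> (op s \<circ> h) - M))
        = (\<Sum>s\<in>set_pmf \<omega>. pmf \<omega> s * \<Phi> (op s \<circ> h)) - (\<Sum>s\<in>set_pmf \<omega>. pmf \<omega> s) * M"
      by (simp add: right_diff_distrib sum_subtractf sum_distrib_right)
    also have "\<dots> \<le> 0" using le one by simp
    finally have le0: "(\<Sum>s\<in>set_pmf \<omega>. pmf \<omega> s * (\<Phi> (op s \<circ> h) - M)) \<le> 0" .
    have nn: "\<forall>t\<in>set_pmf \<omega>. 0 \<le> pmf \<omega> t * (\<Phi> (op t \<circ> h) - M)"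
    proof
      fix t assume t: "t \<in> set_pmf \<omega>"
      have "M \<le> \<Phi> (op t \<circ> h)" using Mle sink_step[OF C(1) h(1) t] by blast
      then show "0 \<le> pmf \<omega> t * (\<Phi> (op t \<circ> h) - M)" by simp
    qed
    have "(\<Sum>s\<in>set_pmf \<omega>. pmf \<omega> s * (\<Phi> (op s \<circ> h) - M)) \<ge> 0"
    proof (rule sum_nonneg)
      fix t assume "t \<in> set_pmf \<omega>"
      then show "0 \<le> pmf \<omega> t * (\<Phi> (op t \<circ> h) - M)" using nn by blast
    qed
    then have "(\<Sum>s\<in>set_pmf \<omega>. pmf \<omega> s * (\<Phi> (op s \<circ> h) - M)) = 0"
      using le0 by linarith
    then have "\<forall>t\<in>set_pmf \<omega>. pmf \<omega> t * (\<Phi> (op t \<circ> h) - M) = 0"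
      by (subst sum_nonneg_eq_0_iff[OF fin, symmetric]) (use nn in auto)
    then have "pmf \<omega> s * (\<Phi> (op s \<circ> h) - M) = 0" using s by (rule bspec)
    moreover have "pmf \<omega> s > 0" using s by (simp add: pmf_positive)
    ultimately show ?thesis by simp
  qed
  have allM: "\<Phi> h = M" if "h \<in> C" for h
  proof -
    have "(h1, h) \<in> (Eset \<omega> op)\<^sup>*" using conn h1(1) that by blast
    then have "h \<in> C \<and> \<Phi> h = M"
    proof (induction rule: rtrancl_induct)
      case base
      then show ?case using h1 by simp
    next
      case (step v w)
      then obtain s where s: "s \<in> set_pmf \<omega>" "w = op s \<circ> v" by (auto simp: Eset_iff)
      have "w \<in> C" using sink_step[OF C(1)] step.IH s by blast
      moreover have "\<Phi> w = M" using stepM step.IH s by blast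
      ultimately show ?case by blast
    qed
    then show ?thesis by simp
  qed
  have gh0: "g \<circ> h0 \<in> C" using sink_comp[OF C(1) C(2) g] .
  have "fm f (app n g x) = fm f (app n (g \<circ> h0) y)" by (simp add: xy app_comp)
  also have "\<dots> = ereal (1 / real CARD('m) * \<Phi> (g \<circ> h0))"
    unfolding \<Phi>_def using fm_eq[OF domC[OF gh0] nm] by simp
  also have "\<dots> = ereal (1 / real CARD('m) * \<Phi> h0)" using allM gh0 C(2) by simp
  also have "\<dots> = fm f x" unfolding \<Phi>_def using fm_eq[OF domC[OF C(2)] nm] xy by simp
  finally show ?thesis .
qed




lemma stationary:
  fixes op :: "'s \<Rightarrow> ('m::finite \<Rightarrow> 'a::finite) \<Rightarrow> ('m \<Rightarrow> 'a)"
  assumes fin: "finite (set_pmf \<omega>)"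
  shows "\<exists>lam :: (('m \<Rightarrow> 'a) \<Rightarrow> ('m \<Rightarrow> 'a)) pmf. set_pmf lam \<subseteq> Gstar \<omega> op \<and>
     (\<forall>h. (\<Sum>g\<in>UNIV. pmf lam g * h g) = (\<Sum>g\<in>UNIV. pmf lam g * (\<Sum>s\<in>set_pmf \<omega>. pmf \<omega> s * h (op s \<circ> g))))"
proof -
  let ?GS = "Gstar \<omega> op"
  define P where "P g h = (\<Sum>s\<in>{s\<in>set_pmf \<omega>. op s \<circ> g = h}. pmf \<omega> s)"
    for g h :: "('m \<Rightarrow> 'a) \<Rightarrow> ('m \<Rightarrow> 'a)"
  have Pmix: "(\<Sum>h\<in>UNIV. P g h * F h) = (\<Sum>s\<in>set_pmf \<omega>. pmf \<omega> s * F (op s \<circ> g))"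
    for g and F :: "(('m \<Rightarrow> 'a) \<Rightarrow> ('m \<Rightarrow> 'a)) \<Rightarrow> real"
  proof -
    have "(\<Sum>h\<in>UNIV. P g h * F h) = (\<Sum>h\<in>UNIV. \<Sum>s\<in>{s\<in>set_pmf \<omega>. op s \<circ> g = h}. pmf \<omega> s * F (op s \<circ> g))"
      unfolding P_def sum_distrib_right by (intro sum.cong refl) auto
    also have "\<dots> = (\<Sum>s\<in>set_pmf \<omega>. pmf \<omega> s * F (op s \<circ> g))"
      using sum.group[OF fin, of UNIV "\<lambda>s. op s \<circ> g" "\<lambda>s. pmf \<omega> s * F (op s \<circ> g)"] by simp
    finally show ?thesis .
  qed
  have Pnn: "0 \<le> P g h" for g h unfolding P_def by (simp add: sum_nonneg)
  have Prow: "(\<Sum>h\<in>UNIV. P g h) = 1" for g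
    using Pmix[of g "\<lambda>_. 1"] fin by (simp add: sum_pmf_eq_1)
  have Pout: "P g h = 0" if "g \<in> ?GS" "h \<notin> ?GS" for g h
  proof -
    have "{s\<in>set_pmf \<omega>. op s \<circ> g = h} = {}" using Gstar_step[OF that(1)] that(2) by blast
    then show ?thesis unfolding P_def by (metis sum.empty)
  qed
  define S where "S = {v :: real^(('m \<Rightarrow> 'a) \<Rightarrow> ('m \<Rightarrow> 'a)). (\<forall>g. 0 \<le> v$g) \<and>
      (\<forall>g. (if g \<in> ?GS then 0 else 1) * v$g = 0) \<and> (\<Sum>g\<in>UNIV. v$g) = 1}"
  have memS: "v \<in> S \<longleftrightarrow> (\<forall>g. 0 \<le> v$g) \<and> (\<forall>g. g \<notin> ?GS \<longrightarrow> v$g = 0) \<and> (\<Sum>g\<in>UNIV. v$g) = 1" for v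
    unfolding S_def by (auto split: if_splits)
  define \<Phi> where "\<Phi> v = (\<chi> h. \<Sum>g\<in>UNIV. v$g * P g h)" for v :: "real^(('m \<Rightarrow> 'a) \<Rightarrow> ('m \<Rightarrow> 'a))"
  have cont: "continuous_on S \<Phi>" unfolding \<Phi>_def by (intro continuous_intros)
  have closedS: "closed S" unfolding S_def
    by (intro closed_Collect_conj closed_Collect_all closed_Collect_le closed_Collect_eq continuous_intros)
  have boundedS: "bounded S" unfolding bounded_iff
  proof (intro exI ballI)
    fix v assume "v \<in> S"
    then have "(\<Sum>i\<in>UNIV. \<bar>v$i\<bar>) = 1" by (simp add: memS)
    then show "norm v \<le> 1" using norm_le_l1_cart[of v] by simp
  qed
  have compS: "compact S" using closedS boundedS by (simp add: compact_eq_bounded_closed)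
  have convS: "convex S" unfolding convex_def
  proof (intro ballI allI impI)
    fix x y :: "real^(('m \<Rightarrow> 'a) \<Rightarrow> ('m \<Rightarrow> 'a))" and u v :: real
    assume x: "x \<in> S" and y: "y \<in> S" and uv: "0 \<le> u" "0 \<le> v" "u + v = 1"
    show "u *\<^sub>R x + v *\<^sub>R y \<in> S"
      using x y uv unfolding memS
      by (auto simp: sum.distrib sum_distrib_left[symmetric] algebra_simps)
  qed
  obtain g0 where g0: "g0 \<in> ?GS" using Gstar_ne by blast
  have neS: "S \<noteq> {}"
  proof -
    have "(\<chi> g. if g = g0 then (1::real) else 0) \<in> S" unfolding memS using g0 by auto
    then show ?thesis by blast
  qed
  have maps: "\<Phi> \<in> S \<rightarrow> S"
  proof
    fix v assume v: "v \<in> S"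
    have nn: "0 \<le> v$g" for g using v by (simp add: memS)
    have out: "v$g = 0" if "g \<notin> ?GS" for g using v that unfolding memS by blast
    have s1: "(\<Sum>g\<in>UNIV. v$g) = 1" using v by (simp add: memS)
    have A: "0 \<le> \<Phi> v $ h" for h unfolding \<Phi>_def using nn Pnn by (simp add: sum_nonneg)
    have B: "\<Phi> v $ h = 0" if "h \<notin> ?GS" for h
    proof -
      have "v$g * P g h = 0" for g
        by (cases "g \<in> ?GS") (simp_all add: Pout that out)
      then have "(\<Sum>g\<in>UNIV. v$g * P g h) = 0" by (intro sum.neutral) blast
      then show ?thesis unfolding \<Phi>_def by simp
    qed
    have C: "(\<Sum>h\<in>UNIV. \<Phi> v $ h) = 1"
    proof -
      have "(\<Sum>h\<in>UNIV. \<Phi> v $ h) = (\<Sum>h\<in>UNIV. \<Sum>g\<in>UNIV. v$g * P g h)" unfolding \<Phi>_def by simp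
      also have "\<dots> = (\<Sum>g\<in>UNIV. v$g * (\<Sum>h\<in>UNIV. P g h))"
        by (subst sum.swap) (simp add: sum_distrib_left)
      also have "\<dots> = 1" using s1 by (simp add: Prow)
      finally show ?thesis .
    qed
    show "\<Phi> v \<in> S" unfolding memS using A B C by auto
  qed
  obtain v where v: "v \<in> S" "\<Phi> v = v" using brouwer[OF compS convS neS cont maps] by blast
  have nn: "0 \<le> v$g" for g using v by (simp add: memS)
  have out: "v$g = 0" if "g \<notin> ?GS" for g using v(1) that unfolding memS by blast
  have s1: "(\<Sum>g\<in>UNIV. v$g) = 1" using v by (simp add: memS)
  have int1: "(\<integral>\<^sup>+x. ennreal (v$x) \<partial>count_space UNIV) = 1"
    using nn s1 by (simp add: nn_integral_count_space_finite)
  define lam where "lam = embed_pmf (\<lambda>g. v$g)"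
  have pl: "pmf lam g = v$g" for g unfolding lam_def using pmf_embed_pmf[of "\<lambda>g. v$g"] nn int1 by blast
  have sl: "set_pmf lam \<subseteq> ?GS" unfolding lam_def using set_embed_pmf[of "\<lambda>g. v$g"] nn int1 out by auto
  have st: "(\<Sum>g\<in>UNIV. pmf lam g * h g) = (\<Sum>g\<in>UNIV. pmf lam g * (\<Sum>s\<in>set_pmf \<omega>. pmf \<omega> s * h (op s \<circ> g)))"
    for h
  proof -
    have "(\<Sum>g\<in>UNIV. pmf lam g * h g) = (\<Sum>k\<in>UNIV. \<Phi> v $ k * h k)" using v(2) by (simp add: pl)
    also have "\<dots> = (\<Sum>k\<in>UNIV. \<Sum>g\<in>UNIV. v$g * (P g k * h k))"
      unfolding \<Phi>_def by (simp add: sum_distrib_right mult.assoc)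
    also have "\<dots> = (\<Sum>g\<in>UNIV. v$g * (\<Sum>k\<in>UNIV. P g k * h k))"
      by (subst sum.swap) (simp add: sum_distrib_left)
    also have "\<dots> = (\<Sum>g\<in>UNIV. pmf lam g * (\<Sum>s\<in>set_pmf \<omega>. pmf \<omega> s * h (op s \<circ> g)))"
      by (simp add: Pmix pl)
    finally show ?thesis .
  qed
  show ?thesis using sl st by blast
qed




lemma partB:
  fixes op :: "'s \<Rightarrow> ('m::finite \<Rightarrow> 'a::finite) \<Rightarrow> ('m \<Rightarrow> 'a)"
    and lam :: "(('m \<Rightarrow> 'a) \<Rightarrow> ('m \<Rightarrow> 'a)) pmf"
  assumes m2: "CARD('m) \<ge> 2" and sl: "set_pmf lam \<subseteq> Gstar \<omega> op"
    and st: "\<forall>h. (\<Sum>g\<in>UNIV. pmf lam g * h g) = (\<Sum>g\<in>UNIV. pmf lam g * (\<Sum>s\<in>set_pmf \<omega>. pmf \<omega> s * h (op s \<circ> g)))"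
    and nm: "noMinf n f" and cl: "Closed \<omega> op n f" and r2: "RC2 \<omega> op n f" and dx: "in_dom_m n f x"
  shows "f_lambda lam (Gstar \<omega> op) n f i' x = f_lambda lam (Gstar \<omega> op) n f i'' x"
proof -
  let ?GS = "Gstar \<omega> op"
  define r where "r g i = real_of_ereal (f (app n g x i))" for g i
  define W where "W i = (\<Sum>g\<in>UNIV. pmf lam g * r g i)" for i
  define c where "c = real (CARD('m) - 1)"
  have cpos: "c > 0" using m2 by (simp add: c_def)
  have c1: "c + 1 = real CARD('m)" using m2 by (simp add: c_def of_nat_diff)
  have pmf0: "pmf lam g = 0" if "g \<notin> ?GS" for g
    using sl that by (metis pmf_eq_0_set_pmf subsetD)
  have domg: "in_dom_m n f (app n g x)" if "g \<in> ?GS" for g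
    using dom_G[OF cl dx] Gstar_sub that by blast
  have fl: "f_lambda lam ?GS n f i x = ereal (W i)" for i
  proof -
    have "f_lambda lam ?GS n f i x = (\<Sum>g\<in>?GS. ereal (pmf lam g * r g i))"
      unfolding f_lambda_def
    proof (rule sum.cong[OF refl])
      fix g assume g: "g \<in> ?GS"
      have "f (app n g x i) = ereal (r g i)"
        unfolding r_def using domg[OF g] nm by (intro fin_ereal) (auto simp: in_dom_m_def noMinf_def)
      then show "ereal (pmf lam g) * f (app n g x i) = ereal (pmf lam g * r g i)" by simp
    qed
    also have "\<dots> = ereal (\<Sum>g\<in>?GS. pmf lam g * r g i)" by simp
    also have "(\<Sum>g\<in>?GS. pmf lam g * r g i) = W i"
      unfolding W_def by (rule sum.mono_neutral_left) (auto simp: pmf0)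
    finally show ?thesis .
  qed
  have ineq: "W i \<le> (\<Sum>j\<in>UNIV-{i}. W j) / c" for i
  proof -
    have "W i = (\<Sum>g\<in>UNIV. pmf lam g * (\<Sum>s\<in>set_pmf \<omega>. pmf \<omega> s * r (op s \<circ> g) i))"
      unfolding W_def using spec[OF st, of "\<lambda>g. r g i"] by simp
    also have "\<dots> \<le> (\<Sum>g\<in>UNIV. pmf lam g * ((\<Sum>j\<in>UNIV-{i}. r g j) / c))"
    proof (rule sum_mono)
      fix g :: "('m \<Rightarrow> 'a) \<Rightarrow> ('m \<Rightarrow> 'a)"
      show "pmf lam g * (\<Sum>s\<in>set_pmf \<omega>. pmf \<omega> s * r (op s \<circ> g) i) \<le> pmf lam g * ((\<Sum>j\<in>UNIV-{i}. r g j) / c)"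
      proof (cases "g \<in> ?GS")
        case False
        then show ?thesis by (simp add: pmf0)
      next
        case True
        have "(\<Sum>s\<in>set_pmf \<omega>. pmf \<omega> s * real_of_ereal (f (app n (op s) (app n g x) i))) \<le> Roth f (app n g x) i"
          using r2 domg[OF True] unfolding RC2_def by blast
        then have "(\<Sum>s\<in>set_pmf \<omega>. pmf \<omega> s * r (op s \<circ> g) i) \<le> (\<Sum>j\<in>UNIV-{i}. r g j) / c"
          unfolding r_def Roth_def c_def by (simp only: app_comp)
        then show ?thesis by (rule mult_left_mono) simp
      qed
    qed
    also have "\<dots> = (\<Sum>j\<in>UNIV-{i}. W j) / c"
      unfolding W_def
      by (simp add: sum_divide_distrib sum_distrib_left sum.swap[of _ "UNIV-{i}"])
    finally show ?thesis .
  qed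
  define Tot where "Tot = (\<Sum>j\<in>UNIV. W j)"
  have le: "W i * real CARD('m) \<le> Tot" for i
  proof -
    have "Tot = W i + (\<Sum>j\<in>UNIV-{i}. W j)" unfolding Tot_def by (simp add: sum.remove)
    moreover have "W i * c \<le> (\<Sum>j\<in>UNIV-{i}. W j)" using ineq[of i] cpos by (simp add: pos_le_divide_eq)
    ultimately show ?thesis using c1[symmetric] by (simp add: algebra_simps)
  qed
  have eq: "W i * real CARD('m) = Tot" for i
  proof (rule ccontr)
    assume "W i * real CARD('m) \<noteq> Tot"
    then have lt: "W i * real CARD('m) < Tot" using le[of i] by simp
    have "(\<Sum>j\<in>UNIV. W j * real CARD('m)) < (\<Sum>j\<in>(UNIV::'m set). Tot)"
      by (rule sum_strict_mono_ex1) (use le lt in auto)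
    then show False by (simp add: Tot_def sum_distrib_right[symmetric] mult.commute)
  qed
  have "W i' * real CARD('m) = W i'' * real CARD('m)" using eq[of i'] eq[of i''] by simp
  then have "W i' = W i''" by simp
  then show ?thesis using fl by simp
qed




theorem theorem5p4:
  fixes \<Gamma> :: "('a::finite) cost set"
    and \<omega> :: "'s pmf"
    and op :: "'s \<Rightarrow> ('m::finite \<Rightarrow> 'a) \<Rightarrow> ('m \<Rightarrow> 'a)"
  assumes m2: "CARD('m) \<ge> 2"
    and finGamma: "finite \<Gamma>"
    and valued: "\<forall>c\<in>\<Gamma>. valued_Q_inf c"
    and finsupp: "finite (set_pmf \<omega>)"
    and c1: "\<forall>c\<in>\<Gamma>. C1 \<omega> op c"
  shows "(\<forall>n f x g. expressible \<Gamma> n f \<longrightarrow> x \<in> Range_n n (Gstar \<omega> op) \<longrightarrow> in_dom_m n f x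
            \<longrightarrow> g \<in> Gset \<omega> op \<longrightarrow> fm f (app n g x) = fm f x)
       \<and> ((\<forall>c\<in>\<Gamma>. C2 \<omega> op c) \<longrightarrow>
          (\<exists>lam :: (('m \<Rightarrow> 'a) \<Rightarrow> ('m \<Rightarrow> 'a)) pmf. set_pmf lam \<subseteq> Gstar \<omega> op \<and>
             (\<forall>n f x. expressible \<Gamma> n f \<longrightarrow> x \<in> Range_n n (Gstar \<omega> op) \<longrightarrow> in_dom_m n f x
                \<longrightarrow> (\<forall>i' i''. f_lambda lam (Gstar \<omega> op) n f i' x = f_lambda lam (Gstar \<omega> op) n f i'' x))))"
proof -
  have A: "\<forall>n f x g. expressible \<Gamma> n f \<longrightarrow> x \<in> Range_n n (Gstar \<omega> op) \<longrightarrow> in_dom_m n f x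
            \<longrightarrow> g \<in> Gset \<omega> op \<longrightarrow> fm f (app n g x) = fm f x"
  proof (intro allI impI)
    fix n :: nat and f :: "'a list \<Rightarrow> ereal" and x :: "'m \<Rightarrow> 'a list" and g :: "('m \<Rightarrow> 'a) \<Rightarrow> ('m \<Rightarrow> 'a)"
    assume ex: "expressible \<Gamma> n f" and x: "x \<in> Range_n n (Gstar \<omega> op)" and dx: "in_dom_m n f x"
      and g: "g \<in> Gset \<omega> op"
    have P: "noMinf n f" "Closed \<omega> op n f" "RC1 \<omega> op n f"
      using expr_all[OF finsupp valued c1 ex] by auto
    show "fm f (app n g x) = fm f x" by (rule partA[OF finsupp P x dx g])
  qed
  have B: "(\<forall>c\<in>\<Gamma>. C2 \<omega> op c) \<longrightarrow>
          (\<exists>lam :: (('m \<Rightarrow> 'a) \<Rightarrow> ('m \<Rightarrow> 'a)) pmf. set_pmf lam \<subseteq> Gstar \<omega> op \<and>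
             (\<forall>n f x. expressible \<Gamma> n f \<longrightarrow> x \<in> Range_n n (Gstar \<omega> op) \<longrightarrow> in_dom_m n f x
                \<longrightarrow> (\<forall>i' i''. f_lambda lam (Gstar \<omega> op) n f i' x = f_lambda lam (Gstar \<omega> op) n f i'' x)))"
  proof
    assume c2: "\<forall>c\<in>\<Gamma>. C2 \<omega> op c"
    obtain lam :: "(('m \<Rightarrow> 'a) \<Rightarrow> ('m \<Rightarrow> 'a)) pmf" where sl: "set_pmf lam \<subseteq> Gstar \<omega> op"
      and st: "\<forall>h. (\<Sum>g\<in>UNIV. pmf lam g * h g) = (\<Sum>g\<in>UNIV. pmf lam g * (\<Sum>s\<in>set_pmf \<omega>. pmf \<omega> s * h (op s \<circ> g)))"
      using stationary[OF finsupp, of op] by blast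
    have "\<forall>n f x. expressible \<Gamma> n f \<longrightarrow> x \<in> Range_n n (Gstar \<omega> op) \<longrightarrow> in_dom_m n f x
                \<longrightarrow> (\<forall>i' i''. f_lambda lam (Gstar \<omega> op) n f i' x = f_lambda lam (Gstar \<omega> op) n f i'' x)"
    proof (intro allI impI)
      fix n :: nat and f :: "'a list \<Rightarrow> ereal" and x :: "'m \<Rightarrow> 'a list" and i' i'' :: 'm
      assume ex: "expressible \<Gamma> n f" and x: "x \<in> Range_n n (Gstar \<omega> op)" and dx: "in_dom_m n f x"
      have P: "noMinf n f" "Closed \<omega> op n f" "RC2 \<omega> op n f"
        using expr_all[OF finsupp valued c1 ex] c2 by auto
      show "f_lambda lam (Gstar \<omega> op) n f i' x = f_lambda lam (Gstar \<omega> op) n f i'' x"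
        by (rule partB[OF m2 sl st P dx])
    qed
    then show "\<exists>lam :: (('m \<Rightarrow> 'a) \<Rightarrow> ('m \<Rightarrow> 'a)) pmf. set_pmf lam \<subseteq> Gstar \<omega> op \<and>
             (\<forall>n f x. expressible \<Gamma> n f \<longrightarrow> x \<in> Range_n n (Gstar \<omega> op) \<longrightarrow> in_dom_m n f x
                \<longrightarrow> (\<forall>i' i''. f_lambda lam (Gstar \<omega> op) n f i' x = f_lambda lam (Gstar \<omega> op) n f i'' x))"
      using sl by blast
  qed
  show ?thesis using A B by blast
qed


end
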